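(* For any good configuration $F$, $\Pr(\mathcal P_S \text{ belongs to } F)=e^{-(\theta_F+o(1))k}$ as $k\to\infty$, where $\theta_F$ is a constant depending on $F$ (and not on $k$).
   Context: Fix $0<\varepsilon<\frac12$, a constant $M\ge 40$, and an integer $N$ divisible by $21$, sufficiently large in terms of $\varepsilon$ and $M$; let $k\to\infty$. Let $S=[-\frac12M\sqrt k,\frac12M\sqrt k]^2$, tiled by $(MN)^2$ small squares of side $\ell=\sqrt k/N$ (indexed in a fixed $k$-independent way), and let $\mathcal P_S$ be a Poisson process of intensity one in $S$. For a small square $S_i$ containing $r$ points, set $d(S_i)=0$ if $r=0$, $d(S_i)=\lceil N^3r/k\rceil/N$ if $1\le r\le k$, and $d(S_i)=\infty$ if $r>k$. A configuration $F$ is an assignment of a label in $\{0,\infty\}\cup\{j/N:1\le j\le N^3\}$ to each small square; a point set belongs to $F$ if its values $d(S_i)$ equal these labels. Let $\Sigma$ be the set of circles whose centres are centres of small squares and which pass through the centre of at least one other small square; for $\Gamma\in\Sigma$ let $R_\Gamma$ be the set of small squares lying entirely within distance $\frac52\ell\sqrt2$ of $\Gamma$. $F$ is of Type A if some label exceeds $N^2/21$; of Type B if for some $\Gamma\in\Sigma$, $\frac{k}{N^2}\sum_{S_i\in R_\Gamma}d(S_i)\ge\frac{\varepsilon k}{2}$. $F$ is good if it is of neither type. *)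

theory Defs
  imports "HOL-Probability.Probability"
begin

definition poisson_process_on ::
  "'a measure \<Rightarrow> ('a \<Rightarrow> (real \<times> real) set) \<Rightarrow> (real \<times> real) set \<Rightarrow> bool" where
  "poisson_process_on P Xs S \<longleftrightarrow>
     prob_space P \<and>
     (\<forall>\<omega>\<in>space P. finite (Xs \<omega>) \<and> Xs \<omega> \<subseteq> S) \<and>
     (\<forall>(m::nat) (A::nat \<Rightarrow> (real \<times> real) set) (c::nat \<Rightarrow> nat).
        (\<forall>i<m. A i \<in> sets (lborel :: (real \<times> real) measure) \<and> A i \<subseteq> S) \<and>
        (\<forall>i<m. \<forall>j<m. i \<noteq> j \<longrightarrow> A i \<inter> A j = {}) \<longrightarrow>
          {\<omega> \<in> space P. \<forall>i<m. card (Xs \<omega> \<inter> A i) = c i} \<in> sets P \<and>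
          measure P {\<omega> \<in> space P. \<forall>i<m. card (Xs \<omega> \<inter> A i) = c i} =
            (\<Prod>i<m. exp (- measure (lborel :: (real \<times> real) measure) (A i)) *
                      measure (lborel :: (real \<times> real) measure) (A i) ^ c i / fact (c i)))"

definition big_square :: "real \<Rightarrow> nat \<Rightarrow> (real \<times> real) set" where
  "big_square M k = {- M * sqrt k / 2 .. M * sqrt k / 2} \<times> {- M * sqrt k / 2 .. M * sqrt k / 2}"

text \<open>Number of small squares along one side: MN (assumed to be a natural number).\<close>
definition side_count :: "real \<Rightarrow> nat \<Rightarrow> nat" where
  "side_count M N = nat \<lfloor>M * real N\<rfloor>"

definition grid :: "real \<Rightarrow> nat \<Rightarrow> (nat \<times> nat) set" where
  "grid M N = {..<side_count M N} \<times> {..<side_count M N}"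

definition small_square :: "real \<Rightarrow> nat \<Rightarrow> nat \<Rightarrow> nat \<times> nat \<Rightarrow> (real \<times> real) set" where
  "small_square M N k p =
     (let l = sqrt k / N; x0 = - M * sqrt k / 2
      in {x0 + real (fst p) * l .. x0 + (real (fst p) + 1) * l} \<times>
         {x0 + real (snd p) * l .. x0 + (real (snd p) + 1) * l})"

definition d_val :: "nat \<Rightarrow> nat \<Rightarrow> nat \<Rightarrow> ereal" where
  "d_val N k r =
     (if r = 0 then 0
      else if r \<le> k then ereal (real_of_int \<lceil>real N ^ 3 * real r / real k\<rceil> / real N)
      else \<infinity>)"

definition valid_label :: "nat \<Rightarrow> ereal \<Rightarrow> bool" where
  "valid_label N x \<longleftrightarrow> x = 0 \<or> x = \<infinity> \<or> (\<exists>j\<in>{1..N ^ 3}. x = ereal (real j / real N))"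

definition config :: "real \<Rightarrow> nat \<Rightarrow> (nat \<times> nat \<Rightarrow> ereal) \<Rightarrow> bool" where
  "config M N F \<longleftrightarrow> (\<forall>p\<in>grid M N. valid_label N (F p))"

definition belongs :: "real \<Rightarrow> nat \<Rightarrow> nat \<Rightarrow> (real \<times> real) set \<Rightarrow> (nat \<times> nat \<Rightarrow> ereal) \<Rightarrow> bool" where
  "belongs M N k X F \<longleftrightarrow>
     (\<forall>p\<in>grid M N. d_val N k (card (X \<inter> small_square M N k p)) = F p)"

section \<open>Circles and annuli, in lattice units (small squares of side 1)\<close>

text \<open>Scaling the whole picture by the factor sqrt k / N (and translating) is a
  similarity, so the sets R_Gamma below do not depend on k.\<close>

definition centre :: "nat \<times> nat \<Rightarrow> real \<times> real" where
  "centre p = (real (fst p) + 1/2, real (snd p) + 1/2)"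

definition unit_square :: "nat \<times> nat \<Rightarrow> (real \<times> real) set" where
  "unit_square p = {real (fst p) .. real (fst p) + 1} \<times> {real (snd p) .. real (snd p) + 1}"

definition circles :: "real \<Rightarrow> nat \<Rightarrow> ((real \<times> real) \<times> real) set" where
  "circles M N = {(centre p, dist (centre p) (centre q)) | p q. p \<in> grid M N \<and> q \<in> grid M N \<and> p \<noteq> q}"

definition R_set :: "real \<Rightarrow> nat \<Rightarrow> (real \<times> real) \<times> real \<Rightarrow> (nat \<times> nat) set" where
  "R_set M N \<Gamma> = {q \<in> grid M N. \<forall>x\<in>unit_square q.
                      infdist x (sphere (fst \<Gamma>) (snd \<Gamma>)) \<le> 5/2 * sqrt 2}"

definition type_A :: "real \<Rightarrow> nat \<Rightarrow> (nat \<times> nat \<Rightarrow> ereal) \<Rightarrow> bool" where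
  "type_A M N F \<longleftrightarrow> (\<exists>p\<in>grid M N. F p > ereal (real N ^ 2 / 21))"

text \<open>(k/N^2) * sum \<ge> eps*k/2 is equivalent (k > 0) to sum \<ge> eps*N^2/2.\<close>
definition type_B :: "real \<Rightarrow> real \<Rightarrow> nat \<Rightarrow> (nat \<times> nat \<Rightarrow> ereal) \<Rightarrow> bool" where
  "type_B \<epsilon> M N F \<longleftrightarrow>
     (\<exists>\<Gamma>\<in>circles M N. (\<Sum>q\<in>R_set M N \<Gamma>. F q) \<ge> ereal (\<epsilon> * real N ^ 2 / 2))"

definition good :: "real \<Rightarrow> real \<Rightarrow> nat \<Rightarrow> (nat \<times> nat \<Rightarrow> ereal) \<Rightarrow> bool" where
  "good \<epsilon> M N F \<longleftrightarrow> config M N F \<and> \<not> type_A M N F \<and> \<not> type_B \<epsilon> M N F"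

end

theory Submission
  imports Defs
begin


lemma emeasure_box2:
  fixes a b c d :: real
  assumes "a \<le> b" "c \<le> d"
  shows "emeasure (lborel :: (real\<times>real) measure) ({a<..<b} \<times> {c<..<d}) = ennreal ((b-a)*(d-c))"
    and "emeasure (lborel :: (real\<times>real) measure) ({a..b} \<times> {c..d}) = ennreal ((b-a)*(d-c))"
proof -
  show "emeasure (lborel :: (real\<times>real) measure) ({a<..<b} \<times> {c<..<d}) = ennreal ((b-a)*(d-c))"
    unfolding lborel_prod[symmetric]
    using assms by (subst lborel.emeasure_pair_measure_Times) (auto simp: ennreal_mult)
  show "emeasure (lborel :: (real\<times>real) measure) ({a..b} \<times> {c..d}) = ennreal ((b-a)*(d-c))"
    unfolding lborel_prod[symmetric]
    using assms by (subst lborel.emeasure_pair_measure_Times) (auto simp: ennreal_mult)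
qed

lemma measure_box2:
  fixes a b c d :: real
  assumes "a \<le> b" "c \<le> d"
  shows "measure (lborel :: (real\<times>real) measure) ({a<..<b} \<times> {c<..<d}) = (b-a)*(d-c)"
    and "measure (lborel :: (real\<times>real) measure) ({a..b} \<times> {c..d}) = (b-a)*(d-c)"
  using emeasure_box2[OF assms] assms by (auto simp: measure_def)



definition Irate :: "real \<Rightarrow> real" where "Irate x = x * ln x - x + 1"

lemma ln_diff_ge: "0 < (x::real) \<Longrightarrow> 0 < y \<Longrightarrow> ln y - ln x \<ge> 1 - x / y"
proof -
  assume "0 < x" "0 < y"
  have "ln (x/y) \<le> x/y - 1" using \<open>0<x\<close> \<open>0<y\<close> by (intro ln_le_minus_one) auto
  moreover have "ln (x/y) = ln x - ln y" using \<open>0<x\<close> \<open>0<y\<close> by (simp add: ln_div)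
  ultimately show ?thesis by simp
qed

lemma Irate_mono_ge1: "1 \<le> x \<Longrightarrow> x \<le> y \<Longrightarrow> Irate x \<le> Irate y"
proof -
  assume h: "1 \<le> x" "x \<le> y"
  have d: "ln y - ln x \<ge> 1 - x / y" using h by (intro ln_diff_ge) auto
  have "y * (ln y - ln x) \<ge> y * (1 - x/y)" using d h by (intro mult_left_mono) auto
  also have "y * (1 - x/y) = y - x" using h by (simp add: field_simps)
  finally have 1: "y * (ln y - ln x) \<ge> y - x" .
  have "(y - x) * ln x \<ge> 0" using h by auto
  have "y * ln y - x * ln x = y * (ln y - ln x) + (y - x) * ln x" by (simp add: algebra_simps)
  thus ?thesis unfolding Irate_def using 1 \<open>(y - x) * ln x \<ge> 0\<close> by linarith
qed

lemma Irate_anti_le1: "0 < x \<Longrightarrow> x \<le> y \<Longrightarrow> y \<le> 1 \<Longrightarrow> Irate y \<le> Irate x"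
proof -
  assume h: "0 < x" "x \<le> y" "y \<le> 1"
  have d: "ln x - ln y \<ge> 1 - y / x" using h by (intro ln_diff_ge) auto
  have "x * (ln x - ln y) \<ge> x * (1 - y/x)" using d h by (intro mult_left_mono) auto
  also have "x * (1 - y/x) = x - y" using h by (simp add: field_simps)
  finally have 1: "x * (ln x - ln y) \<ge> x - y" .
  have "ln y \<le> 0" using h by auto
  hence 2: "(x - y) * ln y \<ge> 0" using h by (intro mult_nonpos_nonpos) auto
  have "x * ln x - y * ln y = x * (ln x - ln y) + (x - y) * ln y" by (simp add: algebra_simps)
  thus ?thesis unfolding Irate_def using 1 2 by linarith
qed

lemma ln_fact_lower: "1 \<le> n \<Longrightarrow> real n * ln (real n) - real n \<le> ln (fact n)"
proof (induction n rule: dec_induct)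
  case base thus ?case by simp
next
  case (step n)
  have n: "real n \<ge> 1" using step by simp
  have "ln (real (Suc n)) - ln (real n) \<le> 1 / real n"
  proof -
    have "ln (real (Suc n) / real n) \<le> real (Suc n) / real n - 1"
      using n by (intro ln_le_minus_one) auto
    also have "real (Suc n) / real n - 1 = 1 / real n" using n by (simp add: field_simps)
    finally show ?thesis using n by (simp add: ln_div)
  qed
  hence a: "real n * (ln (real (Suc n)) - ln (real n)) \<le> 1"
    using n by (simp add: divide_simps mult.commute)
  have "ln (fact (Suc n) :: real) = ln (real (Suc n)) + ln (fact n)"
    by (simp add: ln_mult del: of_nat_Suc)
  moreover have "real (Suc n) * ln (real (Suc n)) = real n * ln (real (Suc n)) + ln (real (Suc n))"
    by (simp add: distrib_right)
  moreover have "real n * (ln (real (Suc n)) - ln (real n)) = real n * ln (real (Suc n)) - real n * ln (real n)"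
    by (simp add: right_diff_distrib)
  moreover have "real (Suc n) = real n + 1" by simp
  ultimately show ?case using step.IH a by (smt (verit))
qed

lemma ln_fact_upper: "1 \<le> n \<Longrightarrow> ln (fact n) \<le> 1 + (real n + 1) * ln (real n) - real n"
proof (induction n rule: dec_induct)
  case base thus ?case by simp
next
  case (step n)
  have n: "real n \<ge> 1" using step by simp
  have "ln (real (Suc n)) - ln (real n) \<ge> 1 / real (Suc n)"
  proof -
    have "ln (real (Suc n)) - ln (real n) \<ge> 1 - real n / real (Suc n)"
      using n by (intro ln_diff_ge) auto
    moreover have "1 - real n / real (Suc n) = 1 / real (Suc n)" by (simp add: field_simps)
    ultimately show ?thesis by simp
  qed
  hence a: "real (Suc n) * (ln (real (Suc n)) - ln (real n)) \<ge> 1"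
    by (simp add: divide_simps mult.commute del: of_nat_Suc)
  have "ln (fact (Suc n) :: real) = ln (real (Suc n)) + ln (fact n)"
    by (simp add: ln_mult del: of_nat_Suc)
  moreover have "(real (Suc n) + 1) * ln (real (Suc n)) = real (Suc n) * ln (real (Suc n)) + ln (real (Suc n))"
    by (simp add: distrib_right)
  moreover have "(real n + 1) * ln (real n) = real (Suc n) * ln (real n)" by simp
  moreover have "real (Suc n) * (ln (real (Suc n)) - ln (real n)) = real (Suc n) * ln (real (Suc n)) - real (Suc n) * ln (real n)"
    by (simp add: right_diff_distrib)
  moreover have "real (Suc n) = real n + 1" by simp
  ultimately show ?case using step.IH a by (smt (verit))
qed

definition pt :: "real \<Rightarrow> nat \<Rightarrow> real" where
  "pt l r = exp (- l) * l ^ r / fact r"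

lemma ln_pt: "0 < l \<Longrightarrow> ln (pt l r) = - l + real r * ln l - ln (fact r)"
  unfolding pt_def by (simp add: ln_mult ln_div ln_realpow)

lemma pt_pos: "0 < l \<Longrightarrow> 0 < pt l r"
  unfolding pt_def by simp

lemma pt_upper: "0 < l \<Longrightarrow> 1 \<le> r \<Longrightarrow> ln (pt l r) \<le> - l * Irate (real r / l)"
proof -
  assume h: "0 < l" "1 \<le> r"
  have "- l * Irate (real r / l) = - l + real r * ln l - (real r * ln (real r) - real r)"
    unfolding Irate_def using h by (simp add: ln_div field_simps)
  thus ?thesis using ln_pt[OF h(1), of r] ln_fact_lower[OF h(2)] by linarith
qed

lemma pt_lower: "0 < l \<Longrightarrow> 1 \<le> r \<Longrightarrow> ln (pt l r) \<ge> - l * Irate (real r / l) - 1 - ln (real r)"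
proof -
  assume h: "0 < l" "1 \<le> r"
  have "- l * Irate (real r / l) = - l + real r * ln l - (real r * ln (real r) - real r)"
    unfolding Irate_def using h by (simp add: ln_div field_simps)
  thus ?thesis using ln_pt[OF h(1), of r] ln_fact_upper[OF h(2)] by (simp add: algebra_simps)
qed



lemma ln_lin_over_x: 
  assumes "0 < (B::real)"
  shows "((\<lambda>x. (A + ln (B*x))/x) \<longlongrightarrow> 0) at_top"
proof -
  have "((\<lambda>x. (A + ln B) * inverse x + ln x / x) \<longlongrightarrow> (A + ln B) * 0 + 0) at_top"
    by (intro tendsto_intros ln_x_over_x_tendsto_0 tendsto_inverse_0_at_top filterlim_ident)
  moreover have "eventually (\<lambda>x. (A + ln B) * inverse x + ln x / x = (A + ln (B*x))/x) at_top"
    using eventually_gt_at_top[of 0]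
    by eventually_elim (use assms in \<open>auto simp: ln_mult field_simps\<close>)
  ultimately show ?thesis by (simp add: tendsto_cong)
qed

lemma poisson_interval_limit:
  fixes a b c :: real
  assumes a0: "0 \<le> a" and ab: "a < b" and side: "b \<le> 1 \<or> 1 \<le> a" and c0: "0 < c"
  defines "lam \<equiv> (\<lambda>k::nat. real k / c)"
  defines "D \<equiv> (\<lambda>k. {r::nat. a * lam k < real r \<and> real r \<le> b * lam k})"
  defines "q \<equiv> (\<lambda>k. sum (pt (lam k)) (D k))"
  shows "((\<lambda>k. ln (q k) / lam k) \<longlongrightarrow> - (if b \<le> 1 then Irate b else Irate a)) sequentially"
    and "eventually (\<lambda>k. 0 < q k) sequentially"
proof -
  define cs where "cs = (if b \<le> 1 then b else a)"
  define th where "th = Irate cs"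
  have cs_pos: "0 < cs" using a0 ab side by (auto simp: cs_def)
  define rs where "rs = (\<lambda>k. if b \<le> 1 then nat \<lfloor>b * lam k\<rfloor> else nat \<lfloor>a * lam k\<rfloor> + 1)"
  have lam_top: "filterlim lam at_top sequentially"
  proof -
    have "filterlim (\<lambda>k. (1/c) * real k) at_top sequentially"
      by (rule filterlim_tendsto_pos_mult_at_top[OF tendsto_const]) (use c0 filterlim_real_sequentially in auto)
    thus ?thesis unfolding lam_def by simp
  qed
  have ev: "eventually (\<lambda>k. max 1 (1/(b-a)) \<le> lam k) sequentially"
    using lam_top unfolding filterlim_at_top by blast
  have Dsub: "D k \<subseteq> {1..nat \<lfloor>b * lam k\<rfloor>}" if "0 \<le> lam k" for k
  proof
    fix r assume "r \<in> D k"
    hence r: "a * lam k < real r" "real r \<le> b * lam k" by (auto simp: D_def)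
    have "0 \<le> a * lam k" using a0 that by simp
    hence "1 \<le> r" using r by linarith
    moreover have "r \<le> nat \<lfloor>b * lam k\<rfloor>" using r by linarith
    ultimately show "r \<in> {1..nat \<lfloor>b * lam k\<rfloor>}" by simp
  qed
  have finD: "finite (D k)" if "0 \<le> lam k" for k
    using Dsub[OF that] finite_subset by blast
  have key: "rs k \<in> D k \<and> 1 \<le> rs k \<and> \<bar>real (rs k) / lam k - cs\<bar> \<le> 1 / lam k
     \<and> real (rs k) \<le> (cs + 1) * lam k"
    if l: "max 1 (1/(b-a)) \<le> lam k" for k
  proof -
    have l1: "1 \<le> lam k" using l by simp
    have "1/(b-a) \<le> lam k" using l by simp
    hence l2: "1 \<le> lam k * (b - a)" using ab by (simp add: field_simps)
    have "a * lam k \<ge> 0" using a0 l1 by simp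
    show ?thesis
    proof (cases "b \<le> 1")
      case True
      have rsk: "rs k = nat \<lfloor>b * lam k\<rfloor>" using True by (simp add: rs_def)
      have bl: "b * lam k \<ge> 0" using ab a0 l1 by simp
      have f1: "real (rs k) \<le> b * lam k" "real (rs k) > b * lam k - 1"
        using bl unfolding rsk by linarith+
      have "a * lam k \<le> b * lam k - 1" using l2 by (simp add: algebra_simps)
      hence inD: "rs k \<in> D k" using f1 unfolding D_def by auto
      have "1 \<le> rs k" using f1 \<open>a * lam k \<ge> 0\<close> \<open>a * lam k \<le> b * lam k - 1\<close> by linarith
      moreover have "\<bar>real (rs k) / lam k - cs\<bar> \<le> 1 / lam k"
      proof -
        have "real (rs k) / lam k - cs = (real (rs k) - b * lam k) / lam k"
          using l1 True by (simp add: cs_def field_simps)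
        moreover have "\<bar>real (rs k) - b * lam k\<bar> \<le> 1" using f1 by linarith
        ultimately show ?thesis using l1 by (simp add: abs_div divide_right_mono)
      qed
      moreover have "real (rs k) \<le> (cs + 1) * lam k" using f1 l1 True by (simp add: cs_def algebra_simps)
      ultimately show ?thesis using inD by simp
    next
      case False
      hence a1: "1 \<le> a" using side by simp
      have rsk: "rs k = nat \<lfloor>a * lam k\<rfloor> + 1" using False by (simp add: rs_def)
      have f1: "real (rs k) \<le> a * lam k + 1" "real (rs k) > a * lam k"
        using \<open>a * lam k \<ge> 0\<close> unfolding rsk by linarith+
      have "a * lam k + 1 \<le> b * lam k" using l2 by (simp add: algebra_simps)
      hence inD: "rs k \<in> D k" using f1 unfolding D_def by auto
      have "1 \<le> rs k" using rsk by simp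
      moreover have "\<bar>real (rs k) / lam k - cs\<bar> \<le> 1 / lam k"
      proof -
        have "real (rs k) / lam k - cs = (real (rs k) - a * lam k) / lam k"
          using l1 False by (simp add: cs_def field_simps)
        moreover have "\<bar>real (rs k) - a * lam k\<bar> \<le> 1" using f1 by linarith
        ultimately show ?thesis using l1 by (simp add: abs_div divide_right_mono)
      qed
      moreover have "real (rs k) \<le> (cs + 1) * lam k" using f1 l1 False by (simp add: cs_def algebra_simps)
      ultimately show ?thesis using inD by simp
    qed
  qed
  have qpos: "0 < q k" if l: "max 1 (1/(b-a)) \<le> lam k" for k
  proof -
    have l0: "0 < lam k" using l by linarith
    have "pt (lam k) (rs k) \<le> q k" unfolding q_def
      using key[OF l] finD[of k] l0 pt_pos[OF l0]
      by (intro member_le_sum) (auto simp: less_imp_le)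
    thus ?thesis using pt_pos[OF l0, of "rs k"] by linarith
  qed
  show "eventually (\<lambda>k. 0 < q k) sequentially" using ev by eventually_elim (rule qpos)
  define L where "L = (\<lambda>k. - Irate (real (rs k) / lam k) - (1 + ln ((cs+1) * lam k)) / lam k)"
  define U where "U = (\<lambda>k. - th + ln (b * lam k) / lam k)"
  have lowb: "L k \<le> ln (q k) / lam k" if l: "max 1 (1/(b-a)) \<le> lam k" for k
  proof -
    have l0: "0 < lam k" using l by linarith
    have K: "rs k \<in> D k" "1 \<le> rs k" "real (rs k) \<le> (cs + 1) * lam k" using key[OF l] by auto
    have "pt (lam k) (rs k) \<le> q k" unfolding q_def
      using K finD[of k] l0 pt_pos[OF l0]
      by (intro member_le_sum) (auto simp: less_imp_le)
    hence "ln (pt (lam k) (rs k)) \<le> ln (q k)" using pt_pos[OF l0, of "rs k"] by (simp add: ln_le_cancel_iff)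
    moreover have "ln (real (rs k)) \<le> ln ((cs+1) * lam k)" using K by simp
    ultimately have "- lam k * Irate (real (rs k) / lam k) - 1 - ln ((cs+1) * lam k) \<le> ln (q k)"
      using pt_lower[OF l0 K(2)] by linarith
    hence "(- lam k * Irate (real (rs k) / lam k) - 1 - ln ((cs+1) * lam k)) / lam k \<le> ln (q k) / lam k"
      using l0 by (simp add: divide_right_mono)
    moreover have "(- lam k * Irate (real (rs k) / lam k) - 1 - ln ((cs+1) * lam k)) / lam k = L k"
      unfolding L_def using l0 by (simp add: field_simps)
    ultimately show ?thesis by simp
  qed
  have uppb: "ln (q k) / lam k \<le> U k" if l: "max 1 (1/(b-a)) \<le> lam k" for k
  proof -
    have l0: "0 < lam k" using l by linarith
    have each: "pt (lam k) r \<le> exp (- lam k * th)" if r: "r \<in> D k" for r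
    proof -
      have r1: "a * lam k < real r" "real r \<le> b * lam k" using r by (auto simp: D_def)
      have rpos: "1 \<le> r" using Dsub[of k] l0 r by auto
      have x1: "real r / lam k \<le> b" "a < real r / lam k" using r1 l0 by (auto simp: field_simps)
      have "th \<le> Irate (real r / lam k)"
      proof (cases "b \<le> 1")
        case True
        thus ?thesis unfolding th_def cs_def using x1 rpos l0
          by (auto intro!: Irate_anti_le1)
      next
        case False
        thus ?thesis unfolding th_def cs_def using x1 side
          by (auto intro!: Irate_mono_ge1)
      qed
      hence "lam k * th \<le> lam k * Irate (real r / lam k)"
        using l0 by (intro mult_left_mono) auto
      hence "ln (pt (lam k) r) \<le> - lam k * th"
        using pt_upper[OF l0 rpos] by simp
      thus ?thesis using pt_pos[OF l0] by (metis exp_ln exp_le_cancel_iff)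
    qed
    have "q k \<le> of_nat (card (D k)) * exp (- lam k * th)"
      unfolding q_def using each by (rule sum_bounded_above)
    also have "real (card (D k)) \<le> b * lam k"
    proof -
      have "card (D k) \<le> card {1..nat \<lfloor>b * lam k\<rfloor>}" using Dsub[of k] l0 by (intro card_mono) auto
      hence "card (D k) \<le> nat \<lfloor>b * lam k\<rfloor>" by simp
      moreover have "real (nat \<lfloor>b * lam k\<rfloor>) \<le> b * lam k"
      proof -
        have "0 \<le> b * lam k" using ab a0 l0 by simp
        thus ?thesis by linarith
      qed
      ultimately show ?thesis by (meson of_nat_le_iff order_trans)
    qed
    hence "of_nat (card (D k)) * exp (- lam k * th) \<le> (b * lam k) * exp (- lam k * th)"
      by (intro mult_right_mono) auto
    finally have "q k \<le> (b * lam k) * exp (- lam k * th)" .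
    hence "ln (q k) \<le> ln ((b * lam k) * exp (- lam k * th))"
      using qpos[OF l] by simp
    also have "\<dots> = ln (b * lam k) - lam k * th" using ab a0 l0 by (simp add: ln_mult)
    finally have "ln (q k) / lam k \<le> (ln (b * lam k) - lam k * th) / lam k"
      using l0 by (simp add: divide_right_mono)
    also have "\<dots> = U k" unfolding U_def using l0 by (simp add: field_simps)
    finally show ?thesis .
  qed
  have inv0: "((\<lambda>k. 1 / lam k) \<longlongrightarrow> 0) sequentially"
    using tendsto_inverse_0_at_top[OF lam_top] by (simp add: divide_inverse)
  have rs_lim: "((\<lambda>k. real (rs k) / lam k) \<longlongrightarrow> cs) sequentially"
  proof (rule tendsto_sandwich[of "\<lambda>k. cs - 1 / lam k" _ _ "\<lambda>k. cs + 1 / lam k"])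
    show "eventually (\<lambda>k. cs - 1 / lam k \<le> real (rs k) / lam k) sequentially"
      using ev by eventually_elim (use key in \<open>force simp: abs_le_iff\<close>)
    show "eventually (\<lambda>k. real (rs k) / lam k \<le> cs + 1 / lam k) sequentially"
      using ev by eventually_elim (use key in \<open>force simp: abs_le_iff\<close>)
    show "((\<lambda>k. cs - 1 / lam k) \<longlongrightarrow> cs) sequentially"
      using tendsto_diff[OF tendsto_const inv0, of cs] by simp
    show "((\<lambda>k. cs + 1 / lam k) \<longlongrightarrow> cs) sequentially"
      using tendsto_add[OF tendsto_const inv0, of cs] by simp
  qed
  have Ilim: "((\<lambda>k. Irate (real (rs k) / lam k)) \<longlongrightarrow> th) sequentially"
    unfolding th_def Irate_def using cs_pos
    by (intro tendsto_intros rs_lim) auto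
  have L_lim: "(L \<longlongrightarrow> - th) sequentially"
  proof -
    have "((\<lambda>k. (1 + ln ((cs+1) * lam k)) / lam k) \<longlongrightarrow> 0) sequentially"
      using filterlim_compose[OF ln_lin_over_x lam_top, of "cs+1" 1] cs_pos by simp
    from tendsto_diff[OF tendsto_minus[OF Ilim] this] show ?thesis
      unfolding L_def by simp
  qed
  have U_lim: "(U \<longlongrightarrow> - th) sequentially"
  proof -
    have "((\<lambda>k. (0 + ln (b * lam k)) / lam k) \<longlongrightarrow> 0) sequentially"
      using filterlim_compose[OF ln_lin_over_x lam_top, of b 0] ab a0 by simp
    from tendsto_add[OF tendsto_const this, of "-th"] show ?thesis
      unfolding U_def by simp
  qed
  have "((\<lambda>k. ln (q k) / lam k) \<longlongrightarrow> - th) sequentially"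
    by (rule tendsto_sandwich[OF _ _ L_lim U_lim])
       (use ev lowb uppb in \<open>auto elim: eventually_mono\<close>)
  thus "((\<lambda>k. ln (q k) / lam k) \<longlongrightarrow> - (if b \<le> 1 then Irate b else Irate a)) sequentially"
    by (cases "b \<le> 1") (simp_all add: th_def cs_def)
qed



definition Dset :: "nat \<Rightarrow> nat \<Rightarrow> ereal \<Rightarrow> nat set" where
  "Dset N k v = {r. d_val N k r = v}"

definition qlab :: "nat \<Rightarrow> nat \<Rightarrow> ereal \<Rightarrow> real" where
  "qlab N k v = (\<Sum>r\<in>Dset N k v. pt (real k / real N ^ 2) r)"

lemma Dset_zero: "0 < N \<Longrightarrow> Dset N k 0 = {0}"
proof -
  assume N: "0 < N"
  have "d_val N k r \<noteq> 0" if "r \<noteq> 0" for r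
  proof (cases "r \<le> k")
    case True
    hence k: "0 < k" using that by simp
    have "0 < real N ^ 3 * real r / real k" using N k that by simp
    hence c1: "1 \<le> \<lceil>real N ^ 3 * real r / real k\<rceil>" by linarith
    hence "0 < real_of_int \<lceil>real N ^ 3 * real r / real k\<rceil> / real N" using N by simp
    moreover have "d_val N k r = ereal (real_of_int \<lceil>real N ^ 3 * real r / real k\<rceil> / real N)"
      using True that by (simp add: d_val_def)
    ultimately show ?thesis by (metis ereal_eq_0(1) less_irrefl)
  next
    case False thus ?thesis using that unfolding d_val_def by auto
  qed
  thus ?thesis unfolding Dset_def by (auto simp: d_val_def)
qed

lemma Dset_pos:
  assumes N: "0 < N" and k: "0 < k" and j: "1 \<le> j" "j \<le> N ^ 3"
  shows "Dset N k (ereal (real j / real N)) =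
     {r::nat. real (j - 1) / real N * (real k / real N ^ 2) < real r \<and> real r \<le> real j / real N * (real k / real N ^ 2)}"
proof -
  have e1: "real (j - 1) / real N * (real k / real N ^ 2) = (real j - 1) * real k / real N ^ 3"
    using j N by (simp add: of_nat_diff field_simps power3_eq_cube power2_eq_square)
  have e2: "real j / real N * (real k / real N ^ 2) = real j * real k / real N ^ 3"
    using N by (simp add: field_simps power3_eq_cube power2_eq_square)
  have N3: "0 < real N ^ 3" using N by simp
  have "d_val N k r = ereal (real j / real N) \<longleftrightarrow>
        (real j - 1) * real k / real N ^ 3 < real r \<and> real r \<le> real j * real k / real N ^ 3" for r
  proof (cases "r = 0")
    case True
    have "ereal 0 \<noteq> ereal (real j / real N)" using j N by simp
    moreover have "\<not> (real j - 1) * real k / real N ^ 3 < 0"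
    proof -
      have "0 \<le> (real j - 1) * real k" using j by simp
      hence "0 \<le> (real j - 1) * real k / real N ^ 3" using N3 by simp
      thus ?thesis by linarith
    qed
    ultimately show ?thesis using True by (simp add: d_val_def zero_ereal_def)
  next
    case r0: False
    show ?thesis
    proof (cases "r \<le> k")
      case True
      have "d_val N k r = ereal (real_of_int \<lceil>real N ^ 3 * real r / real k\<rceil> / real N)"
        using True r0 by (simp add: d_val_def)
      hence "d_val N k r = ereal (real j / real N) \<longleftrightarrow> \<lceil>real N ^ 3 * real r / real k\<rceil> = int j"
        using N by (auto simp: field_simps)
      also have "\<dots> \<longleftrightarrow> real j - 1 < real N ^ 3 * real r / real k \<and> real N ^ 3 * real r / real k \<le> real j"
        by (simp add: ceiling_eq_iff)
      also have "\<dots> \<longleftrightarrow> (real j - 1) * real k / real N ^ 3 < real r \<and> real r \<le> real j * real k / real N ^ 3"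
        using k N3 by (simp add: field_simps)
      finally show ?thesis .
    next
      case False
      have "real j * real k / real N ^ 3 \<le> real k"
      proof -
        have "real j \<le> real N ^ 3" using j(2) by (metis of_nat_le_iff of_nat_power)
        hence "real j * real k \<le> real N ^ 3 * real k" by (intro mult_right_mono) auto
        thus ?thesis using N3 by (simp add: divide_le_eq mult.commute)
      qed
      thus ?thesis using False by (auto simp: d_val_def)
    qed
  qed
  thus ?thesis unfolding Dset_def e1 e2 by auto
qed

lemma label_limit:
  assumes N: "0 < N" and v: "valid_label N v" "v \<noteq> \<infinity>"
  shows "\<exists>th. ((\<lambda>k. ln (qlab N k v) / real k) \<longlongrightarrow> - th) sequentially \<and>
              eventually (\<lambda>k. 0 < qlab N k v) sequentially"
proof -
  consider "v = 0" | j where "j \<in> {1..N^3}" "v = ereal (real j / real N)"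
    using v unfolding valid_label_def by auto
  thus ?thesis
  proof cases
    case 1
    have q: "qlab N k v = exp (- (real k / real N ^ 2))" for k
      using 1 Dset_zero[OF N] by (simp add: qlab_def pt_def)
    have "eventually (\<lambda>k. ln (qlab N k v) / real k = - (1 / real N ^ 2)) sequentially"
      using eventually_gt_at_top[of 0] by eventually_elim (use N in \<open>simp add: q\<close>)
    hence "((\<lambda>k. ln (qlab N k v) / real k) \<longlongrightarrow> - (1 / real N ^ 2)) sequentially"
      by (simp add: tendsto_eventually)
    moreover have "eventually (\<lambda>k. 0 < qlab N k v) sequentially" by (simp add: q)
    ultimately show ?thesis by blast
  next
    case 2
    define a where "a = real (j - 1) / real N"
    define b where "b = real j / real N"
    define c where "c = real N ^ 2"
    have c0: "0 < c" using N by (simp add: c_def)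
    have a0: "0 \<le> a" by (simp add: a_def)
    have ab: "a < b" using 2 N by (simp add: a_def b_def of_nat_diff divide_strict_right_mono)
    have side: "b \<le> 1 \<or> 1 \<le> a"
    proof (cases "j \<le> N")
      case True thus ?thesis using N by (simp add: b_def)
    next
      case False thus ?thesis using N by (simp add: a_def)
    qed
    note L = poisson_interval_limit[OF a0 ab side c0]
    define th0 where "th0 = (if b \<le> 1 then Irate b else Irate a)"
    have eqq: "qlab N k v = (\<Sum>r\<in>{r::nat. a * (real k / c) < real r \<and> real r \<le> b * (real k / c)}. pt (real k / c) r)"
      if "0 < k" for k
      unfolding qlab_def 2 using Dset_pos[OF N that, of j] 2 by (simp add: a_def b_def c_def)
    have lim1: "((\<lambda>k. ln (qlab N k v) / (real k / c)) \<longlongrightarrow> - th0) sequentially"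
      using L(1) unfolding th0_def
    proof (rule Lim_transform_eventually)
      show "eventually (\<lambda>k. ln (\<Sum>r\<in>{r::nat. a * (real k / c) < real r \<and> real r \<le> b * (real k / c)}. pt (real k / c) r) / (real k / c)
          = ln (qlab N k v) / (real k / c)) sequentially"
        using eventually_gt_at_top[of 0] by eventually_elim (simp only: eqq)
    qed
    have pos: "eventually (\<lambda>k. 0 < qlab N k v) sequentially"
      using L(2) eventually_gt_at_top[of 0] by eventually_elim (simp add: eqq)
    have "((\<lambda>k. ln (qlab N k v) / (real k / c) * (1 / c)) \<longlongrightarrow> - th0 * (1 / c)) sequentially"
      by (intro tendsto_intros lim1)
    moreover have "eventually (\<lambda>k. ln (qlab N k v) / (real k / c) * (1 / c) = ln (qlab N k v) / real k) sequentially"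
      using eventually_gt_at_top[of 0] by eventually_elim (use c0 in auto)
    ultimately have "((\<lambda>k. ln (qlab N k v) / real k) \<longlongrightarrow> - (th0 / c)) sequentially"
      by (simp add: tendsto_cong)
    thus ?thesis using pos by blast
  qed
qed



definition iv :: "real \<Rightarrow> nat \<Rightarrow> nat \<Rightarrow> nat \<Rightarrow> real set" where
  "iv M N k a = {- M * sqrt k / 2 + real a * (sqrt k / N) <..< - M * sqrt k / 2 + (real a + 1) * (sqrt k / N)}"
definition cv :: "real \<Rightarrow> nat \<Rightarrow> nat \<Rightarrow> nat \<Rightarrow> real set" where
  "cv M N k a = {- M * sqrt k / 2 + real a * (sqrt k / N) .. - M * sqrt k / 2 + (real a + 1) * (sqrt k / N)}"
definition intsq :: "real \<Rightarrow> nat \<Rightarrow> nat \<Rightarrow> nat \<times> nat \<Rightarrow> (real \<times> real) set" where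
  "intsq M N k p = iv M N k (fst p) \<times> iv M N k (snd p)"
definition Bset :: "real \<Rightarrow> nat \<Rightarrow> nat \<Rightarrow> (real \<times> real) set" where
  "Bset M N k = big_square M k - (\<Union>p\<in>grid M N. intsq M N k p)"

lemma small_square_eq: "small_square M N k p = cv M N k (fst p) \<times> cv M N k (snd p)"
  unfolding small_square_def cv_def Let_def by simp

lemma ell_pos: "0 < k \<Longrightarrow> 0 < N \<Longrightarrow> 0 < sqrt (real k) / real N"
  by simp

lemma iv_cv_disj:
  assumes "0 < k" "0 < N" "a \<noteq> a'"
  shows "iv M N k a \<inter> cv M N k a' = {}"
proof -
  define l where "l = sqrt (real k) / real N"
  have l: "0 < l" using assms by (simp add: l_def)
  show ?thesis
  proof (cases "a < a'")
    case True
    hence "real a + 1 \<le> real a'" by simp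
    hence "(real a + 1) * l \<le> real a' * l" using l by (intro mult_right_mono) auto
    thus ?thesis unfolding iv_def cv_def l_def[symmetric] by auto
  next
    case False
    hence "real a' + 1 \<le> real a" using assms by simp
    hence "(real a' + 1) * l \<le> real a * l" using l by (intro mult_right_mono) auto
    thus ?thesis unfolding iv_def cv_def l_def[symmetric] by auto
  qed
qed

lemma iv_sub_cv: "iv M N k a \<subseteq> cv M N k a"
  unfolding iv_def cv_def by auto

lemma intsq_disj:
  assumes "0 < k" "0 < N" "p \<noteq> q"
  shows "intsq M N k q \<inter> small_square M N k p = {}" "intsq M N k q \<inter> intsq M N k p = {}"
proof -
  have "fst p \<noteq> fst q \<or> snd p \<noteq> snd q" using assms(3) by (cases p, cases q) auto
  hence "iv M N k (fst q) \<inter> cv M N k (fst p) = {} \<or> iv M N k (snd q) \<inter> cv M N k (snd p) = {}"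
    using iv_cv_disj[OF assms(1,2)] by metis
  thus 1: "intsq M N k q \<inter> small_square M N k p = {}"
    unfolding intsq_def small_square_eq by auto
  thus "intsq M N k q \<inter> intsq M N k p = {}"
    using iv_sub_cv unfolding intsq_def small_square_eq by blast
qed

lemma intsq_sub_sq: "intsq M N k p \<subseteq> small_square M N k p"
  unfolding intsq_def small_square_eq using iv_sub_cv by blast

lemma cv_sub:
  assumes "0 < N" "real (side_count M N) = M * real N" "a < side_count M N"
  shows "cv M N k a \<subseteq> {- M * sqrt k / 2 .. M * sqrt k / 2}"
proof -
  define l where "l = sqrt (real k) / real N"
  have l: "0 \<le> l" by (simp add: l_def)
  have "real a + 1 \<le> real (side_count M N)" using assms(3) by linarith
  hence "(real a + 1) * l \<le> real (side_count M N) * l" using l by (intro mult_right_mono) auto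
  also have "real (side_count M N) * l = M * sqrt k" using assms(1,2) by (simp add: l_def)
  finally have 1: "(real a + 1) * l \<le> M * sqrt k" .
  have "0 \<le> real a * l" using l by simp
  thus ?thesis using 1 unfolding cv_def l_def[symmetric] by auto
qed

lemma sq_sub_big:
  assumes "0 < N" "real (side_count M N) = M * real N" "p \<in> grid M N"
  shows "small_square M N k p \<subseteq> big_square M k"
  using cv_sub[OF assms(1,2), of "fst p" k] cv_sub[OF assms(1,2), of "snd p" k] assms(3)
  unfolding small_square_eq big_square_def grid_def by (cases p) auto

lemma iv_eq: "iv M N k a = {(- M * sqrt k / 2 + real a * (sqrt k / N)) <..< (- M * sqrt k / 2 + real a * (sqrt k / N)) + sqrt k / N}"
proof -
  have "- M * sqrt k / 2 + (real a + 1) * (sqrt k / N) = (- M * sqrt k / 2 + real a * (sqrt k / N)) + sqrt k / N"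
    by (simp add: distrib_right add_divide_distrib)
  thus ?thesis unfolding iv_def by (simp only:)
qed

lemma measure_intsq:
  assumes "0 < k" "0 < N"
  shows "measure lborel (intsq M N k p) = real k / real N ^ 2"
proof -
  have l: "0 < sqrt (real k) / real N" using assms by simp
  have "measure lborel (intsq M N k p) = (sqrt (real k) / real N) * (sqrt (real k) / real N)"
    unfolding intsq_def iv_eq
    by (subst measure_box2(1)) (use l in auto)
  thus ?thesis using assms by (simp add: power2_eq_square)
qed

lemma emeasure_intsq_fin: "emeasure lborel (intsq M N k p) \<noteq> \<infinity>"
proof -
  have l: "0 \<le> sqrt (real k) / real N" by simp
  show ?thesis unfolding intsq_def iv_eq
    by (subst emeasure_box2(1)) (use l in auto)
qed

lemma sets_intsq: "intsq M N k p \<in> sets (lborel :: (real\<times>real) measure)"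
  unfolding intsq_def iv_def sets_lborel by (intro borel_open open_Times) auto

lemma sets_sq: "small_square M N k p \<in> sets (lborel :: (real\<times>real) measure)"
  unfolding small_square_eq cv_def sets_lborel by (intro borel_closed closed_Times) auto

lemma sets_big: "big_square M k \<in> sets (lborel :: (real\<times>real) measure)"
  unfolding big_square_def sets_lborel by (intro borel_closed closed_Times) auto

lemma finite_grid: "finite (grid M N)"
  unfolding grid_def by simp

lemma card_grid: "card (grid M N) = side_count M N ^ 2"
  unfolding grid_def by (simp add: power2_eq_square)

lemma sets_Bset: "Bset M N k \<in> sets (lborel :: (real\<times>real) measure)"
  unfolding Bset_def using sets_big sets_intsq finite_grid
  by (intro sets.Diff sets.finite_UN) auto

lemma measure_Bset:
  assumes k: "0 < k" and N: "0 < N" and n: "real (side_count M N) = M * real N"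
  shows "measure lborel (Bset M N k) = 0"
proof -
  have M0: "0 \<le> M" using n N by (metis of_nat_0_le_iff zero_le_mult_iff of_nat_0_less_iff not_le)
  have sub: "(\<Union>p\<in>grid M N. intsq M N k p) \<subseteq> big_square M k"
    using sq_sub_big[OF N n] intsq_sub_sq by blast
  have mb: "measure lborel (big_square M k) = (M * sqrt k) * (M * sqrt k)"
    unfolding big_square_def using M0 by (subst measure_box2(2)) auto
  have eb: "emeasure lborel (big_square M k) \<noteq> \<infinity>"
    unfolding big_square_def using M0 by (subst emeasure_box2(2)) auto
  have "measure lborel (\<Union>p\<in>grid M N. intsq M N k p) = (\<Sum>p\<in>grid M N. measure lborel (intsq M N k p))"
  proof (rule measure_finite_Union)
    show "disjoint_family_on (intsq M N k) (grid M N)"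
      unfolding disjoint_family_on_def using intsq_disj(2)[OF k N] by blast
  qed (use finite_grid sets_intsq emeasure_intsq_fin in auto)
  also have "\<dots> = real (side_count M N) ^ 2 * (real k / real N ^ 2)"
    using measure_intsq[OF k N] by (simp add: card_grid)
  also have "\<dots> = (M * sqrt k) * (M * sqrt k)" using n N by (simp add: field_simps power2_eq_square)
  finally have mu: "measure lborel (\<Union>p\<in>grid M N. intsq M N k p) = (M * sqrt k) * (M * sqrt k)" .
  show ?thesis unfolding Bset_def
    by (subst measure_Diff[OF eb sets_big _ sub]) (use sets_intsq finite_grid mb mu in \<open>auto intro!: sets.finite_UN\<close>)
qed



lemma pp_single:
  assumes pp: "poisson_process_on P Xs S"
    and A: "A \<in> sets (lborel :: (real\<times>real) measure)" "A \<subseteq> S"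
  shows "{\<omega>\<in>space P. card (Xs \<omega> \<inter> A) = r} \<in> sets P"
    and "measure P {\<omega>\<in>space P. card (Xs \<omega> \<inter> A) = r} =
           exp (- measure lborel A) * measure lborel A ^ r / fact r"
proof -
  have all: "\<forall>(m::nat) (A::nat \<Rightarrow> (real \<times> real) set) (c::nat \<Rightarrow> nat).
        (\<forall>i<m. A i \<in> sets (lborel :: (real \<times> real) measure) \<and> A i \<subseteq> S) \<and>
        (\<forall>i<m. \<forall>j<m. i \<noteq> j \<longrightarrow> A i \<inter> A j = {}) \<longrightarrow>
          {\<omega> \<in> space P. \<forall>i<m. card (Xs \<omega> \<inter> A i) = c i} \<in> sets P \<and>
          measure P {\<omega> \<in> space P. \<forall>i<m. card (Xs \<omega> \<inter> A i) = c i} =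
            (\<Prod>i<m. exp (- measure (lborel :: (real \<times> real) measure) (A i)) *
                      measure (lborel :: (real \<times> real) measure) (A i) ^ c i / fact (c i))"
    using pp unfolding poisson_process_on_def by (elim conjE)
  have prem: "(\<forall>i<(1::nat). (\<lambda>_. A) i \<in> sets (lborel :: (real \<times> real) measure) \<and> (\<lambda>_. A) i \<subseteq> S) \<and>
        (\<forall>i<(1::nat). \<forall>j<1. i \<noteq> j \<longrightarrow> (\<lambda>_. A) i \<inter> (\<lambda>_. A) j = {})"
    using A by auto
  have h: "{\<omega> \<in> space P. \<forall>i<(1::nat). card (Xs \<omega> \<inter> (\<lambda>_. A) i) = (\<lambda>_. r) i} \<in> sets P \<and>
       measure P {\<omega> \<in> space P. \<forall>i<(1::nat). card (Xs \<omega> \<inter> (\<lambda>_. A) i) = (\<lambda>_. r) i} =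
       (\<Prod>i<(1::nat). exp (- measure lborel ((\<lambda>_. A) i)) * measure lborel ((\<lambda>_. A) i) ^ (\<lambda>_. r) i / fact ((\<lambda>_. r) i))"
    using mp[OF spec[OF spec[OF spec[OF all, of 1], of "\<lambda>_. A"], of "\<lambda>_. r"] prem] .
  have eqs: "\<And>Q. (\<forall>i<(1::nat). Q) \<longleftrightarrow> Q" by auto
  have eqp: "\<And>f::nat\<Rightarrow>real. (\<Prod>i<(1::nat). f i) = f 0" by simp
  from h show "{\<omega>\<in>space P. card (Xs \<omega> \<inter> A) = r} \<in> sets P"
    "measure P {\<omega>\<in>space P. card (Xs \<omega> \<inter> A) = r} =
           exp (- measure lborel A) * measure lborel A ^ r / fact r" unfolding eqs eqp by auto
qed

lemma Dset_finite: "v \<noteq> \<infinity> \<Longrightarrow> finite (Dset N k v)"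
proof -
  assume v: "v \<noteq> \<infinity>"
  have "Dset N k v \<subseteq> {..k}" unfolding Dset_def using v by (auto simp: d_val_def split: if_splits)
  thus ?thesis using finite_subset by blast
qed

lemma measure_config:
  fixes P :: "'a measure"
  assumes pp: "poisson_process_on P Xs (big_square M k)"
    and k: "0 < k" and N: "0 < N" and n: "real (side_count M N) = M * real N"
    and fin: "\<forall>p\<in>grid M N. F p \<noteq> \<infinity>"
  shows "measure P {\<omega>\<in>space P. belongs M N k (Xs \<omega>) F} = (\<Prod>p\<in>grid M N. qlab N k (F p))"
proof -
  define S where "S = big_square M k"
  define B where "B = Bset M N k"
  define G where "G = grid M N"
  define D where "D = (\<lambda>p. Dset N k (F p))"
  define lam where "lam = real k / real N ^ 2"
  have ps: "prob_space P" using pp unfolding poisson_process_on_def by blast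
  interpret prob_space P by (rule ps)
  have XS: "\<And>\<omega>. \<omega> \<in> space P \<Longrightarrow> finite (Xs \<omega>) \<and> Xs \<omega> \<subseteq> S"
    using pp unfolding poisson_process_on_def S_def by blast
  have finG: "finite G" unfolding G_def by (rule finite_grid)
  have finD: "\<And>p. p \<in> G \<Longrightarrow> finite (D p)" unfolding D_def G_def using fin Dset_finite by blast
  have BS: "B \<subseteq> S" unfolding B_def Bset_def S_def by auto
  have Bsets: "B \<in> sets lborel" unfolding B_def by (rule sets_Bset)
  have mB: "measure lborel B = 0" unfolding B_def by (rule measure_Bset[OF k N n])
  have sqS: "\<And>p. p \<in> G \<Longrightarrow> small_square M N k p \<subseteq> S"
    unfolding S_def G_def using sq_sub_big[OF N n] by blast
  have intS: "\<And>p. p \<in> G \<Longrightarrow> intsq M N k p \<subseteq> S" using sqS intsq_sub_sq by blast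
  define E where "E = {\<omega>\<in>space P. belongs M N k (Xs \<omega>) F}"
  have E_eq: "E = {\<omega>\<in>space P. \<forall>p\<in>G. \<exists>r\<in>D p. card (Xs \<omega> \<inter> small_square M N k p) = r}"
    unfolding E_def belongs_def G_def D_def Dset_def by auto
  have Esets: "E \<in> events" unfolding E_eq
    using finG finD pp_single(1)[OF pp sets_sq sqS[unfolded S_def]]
    by (intro sets.sets_Collect_finite_All sets.sets_Collect_finite_Ex) auto
  define Z where "Z = {\<omega>\<in>space P. card (Xs \<omega> \<inter> B) = 0}"
  have Zsets: "Z \<in> events" unfolding Z_def using pp_single(1)[OF pp Bsets BS[unfolded S_def]] by simp
  have mZ: "prob Z = 1" unfolding Z_def using pp_single(2)[OF pp Bsets BS[unfolded S_def], of 0] mB by simp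
  have sq_int: "Xs \<omega> \<inter> small_square M N k p = Xs \<omega> \<inter> intsq M N k p"
    if w: "\<omega> \<in> space P" "Xs \<omega> \<inter> B = {}" and p: "p \<in> G" for \<omega> p
  proof
    show "Xs \<omega> \<inter> intsq M N k p \<subseteq> Xs \<omega> \<inter> small_square M N k p" using intsq_sub_sq by blast
    show "Xs \<omega> \<inter> small_square M N k p \<subseteq> Xs \<omega> \<inter> intsq M N k p"
    proof
      fix x assume x: "x \<in> Xs \<omega> \<inter> small_square M N k p"
      hence "x \<in> S" using XS[OF w(1)] by blast
      moreover have "x \<notin> B" using x w(2) by blast
      ultimately have "x \<in> (\<Union>p\<in>G. intsq M N k p)"
        unfolding B_def Bset_def S_def G_def by blast
      then obtain q where q: "q \<in> G" "x \<in> intsq M N k q" by blast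
      have "q = p"
      proof (rule ccontr)
        assume "q \<noteq> p"
        thus False using intsq_disj(1)[OF k N, of p q] q x by blast
      qed
      thus "x \<in> Xs \<omega> \<inter> intsq M N k p" using q x by blast
    qed
  qed
  define GG where "GG = {\<omega>\<in>space P. card (Xs \<omega> \<inter> B) = 0 \<and> (\<forall>p\<in>G. card (Xs \<omega> \<inter> intsq M N k p) \<in> D p)}"
  have EZ: "E \<inter> Z = GG"
  proof -
    have c0: "card (Xs \<omega> \<inter> B) = 0 \<longleftrightarrow> Xs \<omega> \<inter> B = {}" if "\<omega> \<in> space P" for \<omega>
      using XS[OF that] by auto
    have "\<omega> \<in> E \<inter> Z \<longleftrightarrow> \<omega> \<in> GG" for \<omega>
    proof (cases "\<omega> \<in> space P \<and> card (Xs \<omega> \<inter> B) = 0")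
      case True
      hence "Xs \<omega> \<inter> B = {}" using c0 by blast
      hence "\<forall>p\<in>G. Xs \<omega> \<inter> small_square M N k p = Xs \<omega> \<inter> intsq M N k p"
        using sq_int True by blast
      thus ?thesis unfolding E_eq Z_def GG_def using True by simp
    next
      case False
      thus ?thesis unfolding E_eq Z_def GG_def by blast
    qed
    thus ?thesis by blast
  qed
  have GGsets: "GG \<in> events" using EZ Esets Zsets by auto
  have mE: "prob E = prob GG"
  proof (rule antisym)
    have "E \<subseteq> GG \<union> (space P - Z)" using EZ Esets sets.sets_into_space by blast
    hence "prob E \<le> prob (GG \<union> (space P - Z))" by (intro finite_measure_mono) (use GGsets Zsets in auto)
    also have "\<dots> \<le> prob GG + prob (space P - Z)" by (intro measure_Un_le) (use GGsets Zsets in auto)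
    also have "prob (space P - Z) = 0" using prob_compl[OF Zsets] mZ by simp
    finally show "prob E \<le> prob GG" by simp
    show "prob GG \<le> prob E" using EZ Esets by (intro finite_measure_mono) auto
  qed
  define Gc where "Gc = (\<lambda>c. {\<omega>\<in>space P. card (Xs \<omega> \<inter> B) = 0 \<and> (\<forall>p\<in>G. card (Xs \<omega> \<inter> intsq M N k p) = c p)})"
  have GG_Un: "GG = (\<Union>c\<in>PiE G D. Gc c)"
  proof
    show "GG \<subseteq> (\<Union>c\<in>PiE G D. Gc c)"
    proof
      fix \<omega> assume w: "\<omega> \<in> GG"
      define c where "c = restrict (\<lambda>p. card (Xs \<omega> \<inter> intsq M N k p)) G"
      have "c \<in> PiE G D" using w unfolding c_def GG_def by auto
      moreover have "\<omega> \<in> Gc c" using w unfolding c_def GG_def Gc_def by auto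
      ultimately show "\<omega> \<in> (\<Union>c\<in>PiE G D. Gc c)" by blast
    qed
    show "(\<Union>c\<in>PiE G D. Gc c) \<subseteq> GG" unfolding GG_def Gc_def by (auto simp: PiE_def Pi_def)
  qed
  obtain h where h: "bij_betw h {0..<card G} G" using ex_bij_betw_nat_finite[OF finG] by blast
  define g where "g = card G"
  define AA where "AA = (\<lambda>i. if i < g then intsq M N k (h i) else B)"
  have Gc_meas: "Gc c \<in> events \<and> prob (Gc c) = (\<Prod>p\<in>G. pt lam (c p))" for c
  proof -
    define cc where "cc = (\<lambda>i. if i < g then c (h i) else 0)"
    have hG: "\<And>i. i < g \<Longrightarrow> h i \<in> G" using h unfolding g_def bij_betw_def by auto
    have hinj: "\<And>i j. i < g \<Longrightarrow> j < g \<Longrightarrow> h i = h j \<Longrightarrow> i = j"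
      using h unfolding g_def bij_betw_def inj_on_def by auto
    have hsurj: "\<And>p. p \<in> G \<Longrightarrow> \<exists>i<g. h i = p"
      using h unfolding g_def bij_betw_def by (metis atLeastLessThan_iff imageE)
    have cond1: "\<forall>i<Suc g. AA i \<in> sets lborel \<and> AA i \<subseteq> big_square M k"
      unfolding AA_def using sets_intsq Bsets intS hG BS unfolding S_def by auto
    have cond2: "\<forall>i<Suc g. \<forall>j<Suc g. i \<noteq> j \<longrightarrow> AA i \<inter> AA j = {}"
    proof (intro allI impI)
      fix i j assume ij: "i < Suc g" "j < Suc g" "i \<noteq> j"
      show "AA i \<inter> AA j = {}"
      proof (cases "i < g \<and> j < g")
        case True
        hence "h i \<noteq> h j" using hinj ij by blast
        thus ?thesis unfolding AA_def using True intsq_disj(2)[OF k N, of "h j" "h i"] by simp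
      next
        case False
        hence "(i < g \<and> j = g) \<or> (i = g \<and> j < g)" using ij by auto
        thus ?thesis unfolding AA_def B_def Bset_def using hG unfolding G_def by auto
      qed
    qed
    have PF: "{\<omega> \<in> space P. \<forall>i<Suc g. card (Xs \<omega> \<inter> AA i) = cc i} \<in> sets P \<and>
       measure P {\<omega> \<in> space P. \<forall>i<Suc g. card (Xs \<omega> \<inter> AA i) = cc i} =
       (\<Prod>i<Suc g. exp (- measure lborel (AA i)) * measure lborel (AA i) ^ cc i / fact (cc i))"
      using pp cond1 cond2 unfolding poisson_process_on_def by blast
    have seteq: "{\<omega> \<in> space P. \<forall>i<Suc g. card (Xs \<omega> \<inter> AA i) = cc i} = Gc c"
    proof -
      have "(\<forall>i<Suc g. card (Xs \<omega> \<inter> AA i) = cc i) \<longleftrightarrow>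
            card (Xs \<omega> \<inter> B) = 0 \<and> (\<forall>p\<in>G. card (Xs \<omega> \<inter> intsq M N k p) = c p)" for \<omega>
      proof -
        have "(\<forall>i<Suc g. card (Xs \<omega> \<inter> AA i) = cc i) \<longleftrightarrow>
              (\<forall>i<g. card (Xs \<omega> \<inter> intsq M N k (h i)) = c (h i)) \<and> card (Xs \<omega> \<inter> B) = 0"
          unfolding AA_def cc_def by (auto simp: less_Suc_eq)
        also have "(\<forall>i<g. card (Xs \<omega> \<inter> intsq M N k (h i)) = c (h i)) \<longleftrightarrow>
                   (\<forall>p\<in>G. card (Xs \<omega> \<inter> intsq M N k p) = c p)"
        proof
          assume H: "\<forall>i<g. card (Xs \<omega> \<inter> intsq M N k (h i)) = c (h i)"
          show "\<forall>p\<in>G. card (Xs \<omega> \<inter> intsq M N k p) = c p"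
          proof
            fix p assume "p \<in> G"
            then obtain i where "i < g" "h i = p" using hsurj by blast
            thus "card (Xs \<omega> \<inter> intsq M N k p) = c p" using H by blast
          qed
        next
          assume "\<forall>p\<in>G. card (Xs \<omega> \<inter> intsq M N k p) = c p"
          thus "\<forall>i<g. card (Xs \<omega> \<inter> intsq M N k (h i)) = c (h i)" using hG by blast
        qed
        finally show ?thesis by blast
      qed
      thus ?thesis unfolding Gc_def by auto
    qed
    have "(\<Prod>i<Suc g. exp (- measure lborel (AA i)) * measure lborel (AA i) ^ cc i / fact (cc i))
          = (\<Prod>i<g. pt lam (c (h i)))"
      unfolding prod.lessThan_Suc
      by (simp add: AA_def cc_def mB pt_def measure_intsq[OF k N] lam_def)
    also have "\<dots> = (\<Prod>i\<in>{0..<g}. pt lam (c (h i)))" by (simp add: lessThan_atLeast0)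
    also have "\<dots> = (\<Prod>p\<in>G. pt lam (c p))"
      using prod.reindex_bij_betw[OF h, of "\<lambda>p. pt lam (c p)"] by (simp add: g_def)
    finally show ?thesis using PF seteq by simp
  qed
  have disj: "disjoint_family_on Gc (PiE G D)"
  proof (unfold disjoint_family_on_def, intro ballI impI)
    fix c c' assume c: "c \<in> PiE G D" "c' \<in> PiE G D" "c \<noteq> c'"
    then obtain p where p: "p \<in> G" "c p \<noteq> c' p" by (meson PiE_ext)
    thus "Gc c \<inter> Gc c' = {}" unfolding Gc_def by auto
  qed
  have finPi: "finite (PiE G D)" using finG finD by (rule finite_PiE)
  have "prob GG = (\<Sum>c\<in>PiE G D. prob (Gc c))"
    unfolding GG_Un by (rule finite_measure_finite_Union[OF finPi _ disj]) (use Gc_meas in auto)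
  also have "\<dots> = (\<Sum>c\<in>PiE G D. \<Prod>p\<in>G. pt lam (c p))" using Gc_meas by simp
  also have "\<dots> = (\<Prod>p\<in>G. \<Sum>r\<in>D p. pt lam r)" by (rule prod_sum_PiE[symmetric]) (use finG finD in auto)
  also have "\<dots> = (\<Prod>p\<in>G. qlab N k (F p))" unfolding qlab_def D_def lam_def by simp
  finally show ?thesis using mE unfolding E_def G_def by simp
qed



theorem lemma10:
  fixes \<epsilon> M :: real
  assumes "0 < \<epsilon>" and "\<epsilon> < 1/2" and "M \<ge> 40"
  shows "\<exists>N0::nat. \<forall>N::nat. N \<ge> N0 \<and> 21 dvd N \<and> M * real N \<in> \<nat> \<longrightarrow>
           (\<forall>F. good \<epsilon> M N F \<longrightarrow>
              (\<exists>(\<theta>::real) (e::nat \<Rightarrow> real). e \<longlonglongrightarrow> 0 \<and>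
                 (\<forall>\<^sub>F k in sequentially.
                    \<forall>(P::'a measure) Xs. poisson_process_on P Xs (big_square M k) \<longrightarrow>
                       measure P {\<omega> \<in> space P. belongs M N k (Xs \<omega>) F}
                         = exp (- (\<theta> + e k) * real k))))"
proof (rule exI[of _ "1::nat"], intro allI impI)
  fix N :: nat and F
  assume H: "1 \<le> N \<and> 21 dvd N \<and> M * real N \<in> \<nat>" and gd: "good \<epsilon> M N F"
  have N: "0 < N" using H by simp
  obtain m where m: "M * real N = real m" using H by (auto elim: Nats_cases)
  have n: "real (side_count M N) = M * real N" unfolding side_count_def m by simp
  define G where "G = grid M N"
  have finG: "finite G" unfolding G_def by (rule finite_grid)
  have fin: "\<forall>p\<in>G. F p \<noteq> \<infinity>" using gd unfolding good_def type_A_def G_def by force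
  have val: "\<forall>p\<in>G. valid_label N (F p)" using gd unfolding good_def config_def G_def by blast
  have "\<forall>p\<in>G. \<exists>th. ((\<lambda>k. ln (qlab N k (F p)) / real k) \<longlongrightarrow> - th) sequentially \<and>
              eventually (\<lambda>k. 0 < qlab N k (F p)) sequentially"
    using label_limit[OF N] fin val by blast
  then obtain TH where TH: "\<And>p. p \<in> G \<Longrightarrow> ((\<lambda>k. ln (qlab N k (F p)) / real k) \<longlongrightarrow> - TH p) sequentially \<and>
              eventually (\<lambda>k. 0 < qlab N k (F p)) sequentially"
    by metis
  define Q where "Q = (\<lambda>k. \<Prod>p\<in>G. qlab N k (F p))"
  define th where "th = (\<Sum>p\<in>G. TH p)"
  define e where "e = (\<lambda>k. - ln (Q k) / real k - th)"
  have evpos: "eventually (\<lambda>k. \<forall>p\<in>G. 0 < qlab N k (F p)) sequentially"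
    using finG TH by (simp add: eventually_ball_finite)
  have evQ: "eventually (\<lambda>k. 0 < k \<and> 0 < Q k \<and> ln (Q k) / real k = (\<Sum>p\<in>G. ln (qlab N k (F p)) / real k)) sequentially"
    using evpos eventually_gt_at_top[of 0]
  proof eventually_elim
    case (elim k)
    have "0 < Q k" unfolding Q_def using elim by (intro prod_pos) auto
    moreover have "ln (Q k) = (\<Sum>p\<in>G. ln (qlab N k (F p)))"
      unfolding Q_def using elim finG by (intro ln_prod) auto
    ultimately show ?case using elim by (simp add: sum_divide_distrib)
  qed
  have "((\<lambda>k. \<Sum>p\<in>G. ln (qlab N k (F p)) / real k) \<longlongrightarrow> (\<Sum>p\<in>G. - TH p)) sequentially"
    using TH by (intro tendsto_sum) auto
  hence "((\<lambda>k. ln (Q k) / real k) \<longlongrightarrow> - th) sequentially"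
    unfolding th_def sum_negf
    by (rule Lim_transform_eventually) (use evQ in \<open>auto elim: eventually_mono\<close>)
  hence "((\<lambda>k. - (ln (Q k) / real k) - th) \<longlongrightarrow> - (- th) - th) sequentially"
    by (intro tendsto_intros)
  hence elim: "e \<longlonglongrightarrow> 0" unfolding e_def by simp
  have "\<forall>\<^sub>F k in sequentially.
          \<forall>(P::'a measure) Xs. poisson_process_on P Xs (big_square M k) \<longrightarrow>
             measure P {\<omega> \<in> space P. belongs M N k (Xs \<omega>) F} = exp (- (th + e k) * real k)"
    using evQ
  proof eventually_elim
    case (elim k)
    show ?case
    proof (intro allI impI)
      fix P :: "'a measure" and Xs
      assume pp: "poisson_process_on P Xs (big_square M k)"
      have "measure P {\<omega> \<in> space P. belongs M N k (Xs \<omega>) F} = Q k"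
        unfolding Q_def G_def using measure_config[OF pp _ N n] elim fin unfolding G_def by blast
      also have "\<dots> = exp (ln (Q k))" using elim by simp
      also have "ln (Q k) = - (th + e k) * real k"
      proof -
        have "th + e k = - ln (Q k) / real k" by (simp add: e_def)
        moreover have "0 < real k" using elim by simp
        ultimately show ?thesis by simp
      qed
      finally show "measure P {\<omega> \<in> space P. belongs M N k (Xs \<omega>) F} = exp (- (th + e k) * real k)" .
    qed
  qed
  thus "\<exists>(\<theta>::real) (e::nat \<Rightarrow> real). e \<longlonglongrightarrow> 0 \<and>
                 (\<forall>\<^sub>F k in sequentially.
                    \<forall>(P::'a measure) Xs. poisson_process_on P Xs (big_square M k) \<longrightarrow>
                       measure P {\<omega> \<in> space P. belongs M N k (Xs \<omega>) F}
                         = exp (- (\<theta> + e k) * real k))"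
    using elim by blast
qed


end
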